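(* Let $g$ be a positive integer, let $l\ge1$, and let $(a,a+g)$ be a consecutive prospective prime pair with gap $g$ in $S_l$. Let $k>l+2$. For $0\le m\le P_k-1$, let $\mathring{n}^g_{S_k^{(m)}}$ be the number of pairs derived from $(a,a+g)$ in $S_k$ that lie in the subset $S_k^{(m)}$, i.e. the number of tuples $(m_{l+1},\dots,m_k)$ with $0\le m_j\le P_j-1$ and $m_k=m$ such that, with $M=\sum_{j=l+1}^k m_jP_{j-1}\#$, both $a+M$ and $a+g+M$ are coprime to $P_k\#$. Then for every $0\le m\le P_k-1$, \[\mathring{n}^g_{S_k^{(m)}}\ge \mathring{n}^g_{k-2}\,(P_{k-1}-4)=(P_{k-1}-4)\prod_{i=l+1}^{k-2}(P_i-2)\cdot\prod_{\substack{i=l+1\\ P_i\mid g}}^{k-2}\frac{P_i-1}{P_i-2}.\]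
   Context: $P_k$ denotes the $k$-th prime ($P_1=2$) and $P_k\#=\prod_{i=1}^kP_i$. $S_k=\{N\in\mathbb{N}:5\le N\le 4+P_k\#\}$ and, for $0\le m\le P_k-1$, $S_k^{(m)}=\{N: 5+mP_{k-1}\#\le N\le 4+(m+1)P_{k-1}\#\}$. A prospective prime in $S_k$ is an $N\in S_k$ coprime to $P_k\#$; prospective primes $a<b$ in $S_k$ are consecutive if no integer strictly between them is coprime to $P_k\#$; a consecutive prospective prime pair with gap $g$ is a pair $(a,a+g)$ of consecutive prospective primes. For $j>l$, $\mathring{n}^g_j=\prod_{i=l+1}^{j}(P_i-2)\prod_{l+1\le i\le j,\,P_i\mid g}\frac{P_i-1}{P_i-2}$. *)

theory Defs
  imports Complex_Main "HOL-Computational_Algebra.Primes" "HOL-Library.Infinite_Set" "HOL-Library.FuncSet"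
begin

text \<open>P k is the k-th prime, 1-indexed (P 1 = 2).\<close>
definition P :: "nat \<Rightarrow> nat" where
  "P k = enumerate {p. prime p} (k - 1)"

definition primorial :: "nat \<Rightarrow> nat" where
  "primorial k = (\<Prod>i\<in>{1..k}. P i)"

definition S :: "nat \<Rightarrow> nat set" where
  "S k = {5 .. 4 + primorial k}"

definition prospective :: "nat \<Rightarrow> nat \<Rightarrow> bool" where
  "prospective k N \<longleftrightarrow> N \<in> S k \<and> coprime N (primorial k)"

definition consec_pair :: "nat \<Rightarrow> nat \<Rightarrow> nat \<Rightarrow> bool" where
  "consec_pair k g a \<longleftrightarrow> 0 < g \<and> prospective k a \<and> prospective k (a + g) \<and>
     (\<forall>n. a < n \<and> n < a + g \<longrightarrow> \<not> coprime n (primorial k))"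

definition derived_count :: "nat \<Rightarrow> nat \<Rightarrow> nat \<Rightarrow> nat \<Rightarrow> nat \<Rightarrow> nat" where
  "derived_count l k g a m = card {ms \<in> (\<Pi>\<^sub>E j\<in>{l+1..k}. {..<P j}).
      ms k = m \<and>
      coprime (a + (\<Sum>j=l+1..k. ms j * primorial (j - 1))) (primorial k) \<and>
      coprime (a + g + (\<Sum>j=l+1..k. ms j * primorial (j - 1))) (primorial k)}"

definition nring :: "nat \<Rightarrow> nat \<Rightarrow> nat \<Rightarrow> real" where
  "nring l g j = (\<Prod>i\<in>{l+1..j}. real (P i) - 2) *
      (\<Prod>i\<in>{i. l+1 \<le> i \<and> i \<le> j \<and> P i dvd g}. (real (P i) - 1) / (real (P i) - 2))"

end

theory Submission
  imports Defs
begin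

lemma P_prime: "prime (P k)"
  unfolding P_def using enumerate_in_set[OF primes_infinite] by simp

lemma P_less: "1 \<le> i \<Longrightarrow> i < j \<Longrightarrow> P i < P j"
  unfolding P_def using enumerate_mono[OF _ primes_infinite] by simp

lemma P_ge2: "P k \<ge> 2"
  using P_prime prime_ge_2_nat by blast

lemma P_ge3: "2 \<le> k \<Longrightarrow> P k \<ge> 3"
  using P_less[of 1 k] P_ge2[of 1] by simp

lemma P_dvd_prim: "1 \<le> i \<Longrightarrow> i \<le> j \<Longrightarrow> P i dvd primorial j"
  unfolding primorial_def by (rule dvd_prodI) auto

lemma coprime_prim_iff: "coprime x (primorial k) \<longleftrightarrow> (\<forall>i\<in>{1..k}. \<not> P i dvd x)"
proof
  assume "coprime x (primorial k)"
  then show "\<forall>i\<in>{1..k}. \<not> P i dvd x"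
    using P_dvd_prim P_prime
    by (metis atLeastAtMost_iff coprime_common_divisor_nat not_prime_1 dvd_refl coprime_commute
      coprime_dvd_mult_right_iff dvd_mult_div_cancel)
next
  assume H: "\<forall>i\<in>{1..k}. \<not> P i dvd x"
  show "coprime x (primorial k)" unfolding primorial_def
    by (rule prod_coprime_right) (metis H P_prime coprime_commute prime_imp_coprime)
qed

lemma coprime_P_prim: "1 \<le> j \<Longrightarrow> coprime (primorial j) (P (Suc j))"
  unfolding primorial_def
  apply (rule prod_coprime_left)
  by (metis P_less P_prime atLeastAtMost_iff le_imp_less_Suc primes_coprime nat_neq_iff)

lemma one_sol:
  fixes p x c n :: nat
  assumes "prime p" "coprime c p" "n \<le> p"
  shows "card {v\<in>{..<n}. p dvd x + v * c} \<le> 1"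
proof -
  have "v1 = v2" if "v1 \<in> {v\<in>{..<n}. p dvd x + v * c}" "v2 \<in> {v\<in>{..<n}. p dvd x + v * c}" for v1 v2
  proof (rule ccontr)
    assume ne: "v1 \<noteq> v2"
    { fix u w assume uw: "u < w" "u < n" "w < n" "p dvd x + u * c" "p dvd x + w * c"
      have "x + w * c = (x + u * c) + (w - u) * c" using uw(1)
        by (simp add: diff_mult_distrib)
      then have "p dvd (w - u) * c" using uw by (metis dvd_add_right_iff)
      then have "p dvd (w - u)" using assms(1,2)
        by (metis coprime_commute coprime_dvd_mult_left_iff)
      moreover have "0 < w - u" "w - u < p" using uw assms(3) by auto
      ultimately have False using nat_dvd_not_less by blast }
    then show False using that ne by (metis (no_types, lifting) lessThan_iff linorder_neqE_nat mem_Collect_eq)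
  qed
  then show ?thesis using card_le_Suc0_iff_eq[of "{v\<in>{..<n}. p dvd x + v * c}"] by auto
qed


lemma card_avoid1:
  "n - card {v\<in>{..<n}. Q1 v} \<le> card {v\<in>{..<n}. \<not> Q1 v}"
proof -
  have e: "{..<n} = {v\<in>{..<n}. \<not> Q1 v} \<union> {v\<in>{..<n}. Q1 v}" by auto
  have "n = card ({v\<in>{..<n}. \<not> Q1 v} \<union> {v\<in>{..<n}. Q1 v})" using e by (metis card_lessThan)
  also have "\<dots> \<le> card {v\<in>{..<n}. \<not> Q1 v} + card {v\<in>{..<n}. Q1 v}" by (rule card_Un_le)
  finally show ?thesis by linarith
qed

lemma card_avoid2:
  "n - card {v\<in>{..<n}. Q1 v} - card {v\<in>{..<n}. Q2 v} \<le> card {v\<in>{..<n}. \<not> Q1 v \<and> \<not> Q2 v}"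
proof -
  have e: "{..<n} = {v\<in>{..<n}. \<not> Q1 v \<and> \<not> Q2 v} \<union> ({v\<in>{..<n}. Q1 v} \<union> {v\<in>{..<n}. Q2 v})" by auto
  have "n = card ({v\<in>{..<n}. \<not> Q1 v \<and> \<not> Q2 v} \<union> ({v\<in>{..<n}. Q1 v} \<union> {v\<in>{..<n}. Q2 v}))"
    using e by (metis card_lessThan)
  also have "\<dots> \<le> card {v\<in>{..<n}. \<not> Q1 v \<and> \<not> Q2 v} + card ({v\<in>{..<n}. Q1 v} \<union> {v\<in>{..<n}. Q2 v})"
    by (rule card_Un_le)
  also have "card ({v\<in>{..<n}. Q1 v} \<union> {v\<in>{..<n}. Q2 v}) \<le> card {v\<in>{..<n}. Q1 v} + card {v\<in>{..<n}. Q2 v}"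
    by (rule card_Un_le)
  finally show ?thesis by linarith
qed

lemma card_avoid4:
  "n - card {v\<in>{..<n}. Q1 v} - card {v\<in>{..<n}. Q2 v} - card {v\<in>{..<n}. Q3 v} - card {v\<in>{..<n}. Q4 v}
    \<le> card {v\<in>{..<n}. \<not> Q1 v \<and> \<not> Q2 v \<and> \<not> Q3 v \<and> \<not> Q4 v}"
proof -
  define A where "A = {v\<in>{..<n}. \<not> Q1 v \<and> \<not> Q2 v \<and> \<not> Q3 v \<and> \<not> Q4 v}"
  define B1 where "B1 = {v\<in>{..<n}. Q1 v}"
  define B2 where "B2 = {v\<in>{..<n}. Q2 v}"
  define B3 where "B3 = {v\<in>{..<n}. Q3 v}"
  define B4 where "B4 = {v\<in>{..<n}. Q4 v}"
  have e: "{..<n} = A \<union> ((B1 \<union> B2) \<union> (B3 \<union> B4))" unfolding A_def B1_def B2_def B3_def B4_def by auto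
  have "n = card (A \<union> ((B1 \<union> B2) \<union> (B3 \<union> B4)))" using e by (metis card_lessThan)
  also have "\<dots> \<le> card A + card ((B1 \<union> B2) \<union> (B3 \<union> B4))" by (rule card_Un_le)
  also have "card ((B1 \<union> B2) \<union> (B3 \<union> B4)) \<le> card (B1 \<union> B2) + card (B3 \<union> B4)" by (rule card_Un_le)
  also have "card (B1 \<union> B2) \<le> card B1 + card B2" by (rule card_Un_le)
  also have "card (B3 \<union> B4) \<le> card B3 + card B4" by (rule card_Un_le)
  finally have "n \<le> card A + (card B1 + card B2 + (card B3 + card B4))" by simp
  then show ?thesis unfolding A_def B1_def B2_def B3_def B4_def by linarith
qed

definition Mv :: "nat \<Rightarrow> (nat \<Rightarrow> nat) \<Rightarrow> nat \<Rightarrow> nat" where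
  "Mv l ms j = (\<Sum>i=l+1..j. ms i * primorial (i - 1))"

definition G :: "nat \<Rightarrow> nat \<Rightarrow> nat \<Rightarrow> nat \<Rightarrow> (nat \<Rightarrow> nat) set" where
  "G l g a j = {ms \<in> (\<Pi>\<^sub>E i\<in>{l+1..j}. {..<P i}).
     \<forall>i\<in>{1..j}. \<not> P i dvd a + Mv l ms j \<and> \<not> P i dvd a + g + Mv l ms j}"

definition cc :: "nat \<Rightarrow> nat \<Rightarrow> nat" where
  "cc g i = (if P i dvd g then P i - 1 else P i - 2)"

lemma Mv_upd:
  assumes "ms \<in> (\<Pi>\<^sub>E i\<in>{l+1..j}. B i)" "l \<le> j"
  shows "Mv l (ms(Suc j := v)) (Suc j) = Mv l ms j + v * primorial j"
proof -
  have "Mv l (ms(Suc j := v)) (Suc j) = (\<Sum>i=l+1..j. (ms(Suc j := v)) i * primorial (i - 1)) + v * primorial j"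
    unfolding Mv_def using assms(2) by simp
  also have "(\<Sum>i=l+1..j. (ms(Suc j := v)) i * primorial (i - 1)) = Mv l ms j"
    unfolding Mv_def by (rule sum.cong) auto
  finally show ?thesis .
qed

lemma dvd_shift:
  "1 \<le> i \<Longrightarrow> i \<le> j \<Longrightarrow> P i dvd X + v * primorial j \<longleftrightarrow> P i dvd X"
  using P_dvd_prim by (meson dvd_add_left_iff dvd_mult)

lemma G_base:
  assumes "coprime a (primorial l)" "coprime (a + g) (primorial l)"
  shows "G l g a l = {\<lambda>_. undefined}"
  using assms unfolding G_def Mv_def coprime_prim_iff by auto

lemma G_step:
  assumes "1 \<le> l" "l \<le> j"
  shows "card (G l g a j) * cc g (Suc j) \<le> card (G l g a (Suc j))"
proof -
  define p where "p = P (Suc j)"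
  define c where "c = primorial j"
  define V where "V ms = {v\<in>{..<p}. \<not> p dvd (a + Mv l ms j) + v * c \<and> \<not> p dvd (a + g + Mv l ms j) + v * c}" for ms
  have pp: "prime p" unfolding p_def by (rule P_prime)
  have cp: "coprime c p" unfolding c_def p_def using coprime_P_prim assms by simp
  have cardV: "cc g (Suc j) \<le> card (V ms)" for ms
  proof (cases "p dvd g")
    case True
    have eq: "p dvd (a + g + Mv l ms j) + v * c \<longleftrightarrow> p dvd (a + Mv l ms j) + v * c" for v
    proof -
      have h: "(a + g + Mv l ms j) + v * c = g + ((a + Mv l ms j) + v * c)" by simp
      show ?thesis unfolding h using dvd_add_right_iff[OF True] by blast
    qed
    have "V ms = {v\<in>{..<p}. \<not> p dvd (a + Mv l ms j) + v * c}"
      unfolding V_def eq by simp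
    moreover have "p - card {v\<in>{..<p}. p dvd (a + Mv l ms j) + v * c} \<le> card {v\<in>{..<p}. \<not> p dvd (a + Mv l ms j) + v * c}"
      by (rule card_avoid1)
    moreover have "card {v\<in>{..<p}. p dvd (a + Mv l ms j) + v * c} \<le> 1" by (rule one_sol[OF pp cp]) simp
    ultimately show ?thesis unfolding cc_def p_def[symmetric] using True by simp
  next
    case False
    have "card {v\<in>{..<p}. p dvd (a + Mv l ms j) + v * c} \<le> 1" by (rule one_sol[OF pp cp]) simp
    moreover have "card {v\<in>{..<p}. p dvd (a + g + Mv l ms j) + v * c} \<le> 1" by (rule one_sol[OF pp cp]) simp
    moreover note card_avoid2[of p "\<lambda>v. p dvd (a + Mv l ms j) + v * c" "\<lambda>v. p dvd (a + g + Mv l ms j) + v * c"]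
    ultimately show ?thesis unfolding cc_def p_def[symmetric] V_def using False by simp
  qed
  define F :: "(nat \<Rightarrow> nat) \<times> nat \<Rightarrow> nat \<Rightarrow> nat" where "F = (\<lambda>(ms, v). ms(Suc j := v))"
  have inj: "inj_on F (Sigma (G l g a j) V)"
  proof (rule inj_onI)
    fix x y assume x: "x \<in> Sigma (G l g a j) V" and y: "y \<in> Sigma (G l g a j) V" and e: "F x = F y"
    obtain ms v where xe: "x = (ms, v)" by fastforce
    obtain ms' v' where ye: "y = (ms', v')" by fastforce
    have "ms \<in> (\<Pi>\<^sub>E i\<in>{l+1..j}. {..<P i})" "ms' \<in> (\<Pi>\<^sub>E i\<in>{l+1..j}. {..<P i})"
      using x y xe ye unfolding G_def by auto
    then have "ms (Suc j) = undefined" "ms' (Suc j) = undefined" by (auto simp: PiE_def extensional_def)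
    moreover have "ms(Suc j := v) = ms'(Suc j := v')" using e xe ye F_def by simp
    ultimately have "v = v'" "ms = ms'"
      by (metis fun_upd_same, intro ext, metis fun_upd_other)
    then show "x = y" using xe ye by simp
  qed
  have img: "F ` Sigma (G l g a j) V \<subseteq> G l g a (Suc j)"
  proof
    fix y assume "y \<in> F ` Sigma (G l g a j) V"
    then obtain ms v where ms: "ms \<in> G l g a j" and v: "v \<in> V ms" and ye: "y = ms(Suc j := v)"
      unfolding F_def by auto
    have msP: "ms \<in> (\<Pi>\<^sub>E i\<in>{l+1..j}. {..<P i})" using ms unfolding G_def by auto
    have Mveq: "Mv l y (Suc j) = Mv l ms j + v * c"
      unfolding ye c_def by (rule Mv_upd[OF msP assms(2)])
    have vlt: "v \<in> {..<P (Suc j)}" using v unfolding V_def p_def by blast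
    have ins: "{l+1..Suc j} = insert (Suc j) {l+1..j}" using assms(2) by auto
    have yP: "y \<in> (\<Pi>\<^sub>E i\<in>{l+1..Suc j}. {..<P i})"
      unfolding ye ins by (rule PiE_fun_upd[OF vlt msP])
    have "\<not> P i dvd a + Mv l y (Suc j) \<and> \<not> P i dvd a + g + Mv l y (Suc j)" if i: "i \<in> {1..Suc j}" for i
    proof (cases "i = Suc j")
      case True
      have h1: "a + Mv l y (Suc j) = (a + Mv l ms j) + v * c" unfolding Mveq by simp
      have h2: "a + g + Mv l y (Suc j) = (a + g + Mv l ms j) + v * c" unfolding Mveq by simp
      show ?thesis using v unfolding h1 h2 True V_def p_def by blast
    next
      case False
      then have "1 \<le> i" "i \<le> j" using i by auto
      have h1: "a + Mv l y (Suc j) = (a + Mv l ms j) + v * primorial j" unfolding Mveq c_def by simp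
      have h2: "a + g + Mv l y (Suc j) = (a + g + Mv l ms j) + v * primorial j" unfolding Mveq c_def by simp
      have "\<forall>i\<in>{1..j}. \<not> P i dvd a + Mv l ms j \<and> \<not> P i dvd a + g + Mv l ms j"
        using ms unfolding G_def by blast
      then show ?thesis unfolding h1 h2 dvd_shift[OF \<open>1 \<le> i\<close> \<open>i \<le> j\<close>]
        using \<open>1 \<le> i\<close> \<open>i \<le> j\<close> by simp
    qed
    then show "y \<in> G l g a (Suc j)" unfolding G_def using yP by auto
  qed
  have finG: "finite (G l g a k)" for k
    unfolding G_def by (rule finite_subset[of _ "\<Pi>\<^sub>E i\<in>{l+1..k}. {..<P i}"]) (auto intro: finite_PiE)
  have "card (G l g a j) * cc g (Suc j) = (\<Sum>ms\<in>G l g a j. cc g (Suc j))" by simp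
  also have "\<dots> \<le> (\<Sum>ms\<in>G l g a j. card (V ms))" by (rule sum_mono) (rule cardV)
  also have "\<dots> = card (Sigma (G l g a j) V)"
    by (rule card_SigmaI[symmetric]) (auto simp: finG V_def)
  also have "\<dots> = card (F ` Sigma (G l g a j) V)" by (rule card_image[OF inj, symmetric])
  also have "\<dots> \<le> card (G l g a (Suc j))" by (rule card_mono[OF finG img])
  finally show ?thesis .
qed

lemma G_bound:
  assumes "1 \<le> l" "l \<le> j" "coprime a (primorial l)" "coprime (a + g) (primorial l)"
  shows "(\<Prod>i=l+1..j. cc g i) \<le> card (G l g a j)"
  using assms(2)
proof (induction j rule: dec_induct)
  case base
  then show ?case using G_base[OF assms(3,4)] by simp
next
  case (step j)
  have "(\<Prod>i=l+1..Suc j. cc g i) = (\<Prod>i=l+1..j. cc g i) * cc g (Suc j)" using step by simp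
  also have "\<dots> \<le> card (G l g a j) * cc g (Suc j)" using step by simp
  also have "\<dots> \<le> card (G l g a (Suc j))" by (rule G_step[OF assms(1) step(1)])
  finally show ?case .
qed


lemma coprime_P_prim2: "1 \<le> j \<Longrightarrow> j < q \<Longrightarrow> coprime (primorial j) (P q)"
  unfolding primorial_def
  apply (rule prod_coprime_left)
  by (metis P_less P_prime atLeastAtMost_iff le_less_trans primes_coprime nat_neq_iff)

lemma nring_eq:
  assumes "1 \<le> l"
  shows "nring l g j = real (\<Prod>i=l+1..j. cc g i)"
proof -
  have s: "{i. l+1 \<le> i \<and> i \<le> j \<and> P i dvd g} = {i\<in>{l+1..j}. P i dvd g}" by auto
  have "(\<Prod>i\<in>{i. l+1 \<le> i \<and> i \<le> j \<and> P i dvd g}. (real (P i) - 1) / (real (P i) - 2))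
      = (\<Prod>i\<in>{l+1..j}. if P i dvd g then (real (P i) - 1) / (real (P i) - 2) else 1)"
    unfolding s using prod.inter_filter[of "{l+1..j}" "\<lambda>i. (real (P i) - 1) / (real (P i) - 2)" "\<lambda>i. P i dvd g"] by simp
  then have "nring l g j = (\<Prod>i\<in>{l+1..j}. (real (P i) - 2) * (if P i dvd g then (real (P i) - 1) / (real (P i) - 2) else 1))"
    unfolding nring_def by (simp add: prod.distrib)
  also have "\<dots> = (\<Prod>i\<in>{l+1..j}. real (cc g i))"
  proof (rule prod.cong)
    fix i assume "i \<in> {l+1..j}"
    then have "P i \<ge> 3" using assms P_ge3 by simp
    then show "(real (P i) - 2) * (if P i dvd g then (real (P i) - 1) / (real (P i) - 2) else 1) = real (cc g i)"
      unfolding cc_def by (auto simp: of_nat_diff)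
  qed simp
  finally show ?thesis by simp
qed

theorem theorem2:
  fixes l k g a m :: nat
  assumes "0 < g" and "1 \<le> l"
    and "consec_pair l g a"
    and "k > l + 2"
    and "m \<le> P k - 1"
  shows "real (derived_count l k g a m) \<ge> nring l g (k - 2) * (real (P (k - 1)) - 4)"
proof -
  define j where "j = k - 2"
  have kj: "k = Suc (Suc j)" and lj: "l < j" using assms(4) unfolding j_def by auto
  have k1: "k - 1 = Suc j" using kj by simp
  have ca: "coprime a (primorial l)" "coprime (a + g) (primorial l)"
    using assms(3) unfolding consec_pair_def prospective_def by auto
  have mlt: "m < P k" using assms(5) P_ge2[of k] by linarith
  define p1 where "p1 = P (Suc j)"
  define p2 where "p2 = P (Suc (Suc j))"
  define c where "c = primorial j"
  define e where "e = m * primorial (Suc j)"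
  define W where "W ms = {v\<in>{..<p1}. \<not> p1 dvd (a + Mv l ms j) + v * c \<and> \<not> p1 dvd (a + g + Mv l ms j) + v * c
      \<and> \<not> p2 dvd (a + Mv l ms j + e) + v * c \<and> \<not> p2 dvd (a + g + Mv l ms j + e) + v * c}" for ms
  define D where "D = {ms \<in> (\<Pi>\<^sub>E j\<in>{l+1..k}. {..<P j}). ms k = m \<and>
      coprime (a + Mv l ms k) (primorial k) \<and> coprime (a + g + Mv l ms k) (primorial k)}"
  have Deq: "derived_count l k g a m = card D" unfolding derived_count_def D_def Mv_def by simp
  have pp1: "prime p1" "prime p2" unfolding p1_def p2_def by (rule P_prime)+
  have cp1: "coprime c p1" "coprime c p2" unfolding c_def p1_def p2_def
    using coprime_P_prim2 lj assms(2) by auto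
  have p12: "p1 \<le> p2" unfolding p1_def p2_def using P_less[of "Suc j" "Suc (Suc j)"] by simp
  have cardW: "p1 - 4 \<le> card (W ms)" for ms
  proof -
    have "card {v\<in>{..<p1}. p1 dvd (a + Mv l ms j) + v * c} \<le> 1" by (rule one_sol[OF pp1(1) cp1(1)]) simp
    moreover have "card {v\<in>{..<p1}. p1 dvd (a + g + Mv l ms j) + v * c} \<le> 1" by (rule one_sol[OF pp1(1) cp1(1)]) simp
    moreover have "card {v\<in>{..<p1}. p2 dvd (a + Mv l ms j + e) + v * c} \<le> 1" by (rule one_sol[OF pp1(2) cp1(2) p12])
    moreover have "card {v\<in>{..<p1}. p2 dvd (a + g + Mv l ms j + e) + v * c} \<le> 1" by (rule one_sol[OF pp1(2) cp1(2) p12])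
    moreover note card_avoid4[of p1 "\<lambda>v. p1 dvd (a + Mv l ms j) + v * c" "\<lambda>v. p1 dvd (a + g + Mv l ms j) + v * c"
       "\<lambda>v. p2 dvd (a + Mv l ms j + e) + v * c" "\<lambda>v. p2 dvd (a + g + Mv l ms j + e) + v * c"]
    ultimately show ?thesis unfolding W_def by linarith
  qed
  define F :: "(nat \<Rightarrow> nat) \<times> nat \<Rightarrow> nat \<Rightarrow> nat" where "F = (\<lambda>(ms, v). ms(Suc j := v, Suc (Suc j) := m))"
  have inj: "inj_on F (Sigma (G l g a j) W)"
  proof (rule inj_onI)
    fix x y assume x: "x \<in> Sigma (G l g a j) W" and y: "y \<in> Sigma (G l g a j) W" and eq: "F x = F y"
    obtain ms v where xe: "x = (ms, v)" by fastforce
    obtain ms' v' where ye: "y = (ms', v')" by fastforce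
    have "ms \<in> (\<Pi>\<^sub>E i\<in>{l+1..j}. {..<P i})" "ms' \<in> (\<Pi>\<^sub>E i\<in>{l+1..j}. {..<P i})"
      using x y xe ye unfolding G_def by auto
    then have u: "ms (Suc j) = undefined" "ms' (Suc j) = undefined"
       "ms (Suc (Suc j)) = undefined" "ms' (Suc (Suc j)) = undefined" by (auto simp: PiE_def extensional_def)
    have eq2: "ms(Suc j := v, Suc (Suc j) := m) = ms'(Suc j := v', Suc (Suc j) := m)" using eq xe ye F_def by simp
    have "v = v'" using fun_cong[OF eq2, of "Suc j"] by simp
    moreover have "ms = ms'"
    proof
      fix i show "ms i = ms' i"
        using fun_cong[OF eq2, of i] u by (cases "i = Suc j"; cases "i = Suc (Suc j)") auto
    qed
    ultimately show "x = y" using xe ye by simp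
  qed
  have img: "F ` Sigma (G l g a j) W \<subseteq> D"
  proof
    fix y assume "y \<in> F ` Sigma (G l g a j) W"
    then obtain ms v where ms: "ms \<in> G l g a j" and v: "v \<in> W ms" and ye: "y = ms(Suc j := v, Suc (Suc j) := m)"
      unfolding F_def by auto
    have msP: "ms \<in> (\<Pi>\<^sub>E i\<in>{l+1..j}. {..<P i})" using ms unfolding G_def by auto
    have vlt: "v \<in> {..<P (Suc j)}" using v unfolding W_def p1_def by blast
    have ins: "{l+1..Suc j} = insert (Suc j) {l+1..j}" using lj by auto
    have ins2: "{l+1..Suc (Suc j)} = insert (Suc (Suc j)) {l+1..Suc j}" using lj by auto
    have y1P: "ms(Suc j := v) \<in> (\<Pi>\<^sub>E i\<in>{l+1..Suc j}. {..<P i})"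
      unfolding ins by (rule PiE_fun_upd[OF vlt msP])
    have yP: "y \<in> (\<Pi>\<^sub>E i\<in>{l+1..k}. {..<P i})"
      unfolding ye kj ins2 by (rule PiE_fun_upd[OF _ y1P]) (use mlt kj in simp)
    have m1: "Mv l (ms(Suc j := v, Suc (Suc j) := m)) (Suc (Suc j)) = Mv l (ms(Suc j := v)) (Suc j) + m * primorial (Suc j)"
      by (rule Mv_upd[OF y1P]) (use lj in simp)
    have m2: "Mv l (ms(Suc j := v)) (Suc j) = Mv l ms j + v * primorial j"
      by (rule Mv_upd[OF msP]) (use lj in simp)
    have Mveq: "Mv l y k = Mv l ms j + v * c + e"
      unfolding ye kj m1 m2 c_def e_def by simp
    have ym: "y k = m" unfolding ye kj by simp
    have G1: "\<forall>i\<in>{1..j}. \<not> P i dvd a + Mv l ms j \<and> \<not> P i dvd a + g + Mv l ms j"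
      using ms unfolding G_def by blast
    have "\<not> P i dvd a + Mv l y k \<and> \<not> P i dvd a + g + Mv l y k" if i: "i \<in> {1..k}" for i
    proof -
      have h1: "a + Mv l y k = ((a + Mv l ms j) + v * primorial j) + m * primorial (Suc j)"
        unfolding Mveq c_def e_def by simp
      have h2: "a + g + Mv l y k = ((a + g + Mv l ms j) + v * primorial j) + m * primorial (Suc j)"
        unfolding Mveq c_def e_def by simp
      have h3: "a + Mv l y k = (a + Mv l ms j + e) + v * c"
        unfolding Mveq by simp
      have h4: "a + g + Mv l y k = (a + g + Mv l ms j + e) + v * c"
        unfolding Mveq by simp
      consider "i \<le> j" | "i = Suc j" | "i = Suc (Suc j)" using i kj by force
      then show ?thesis
      proof cases
        case 1
        then show ?thesis using G1 i unfolding h1 h2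
          by (simp add: dvd_shift)
      next
        case 2
        then show ?thesis using v i unfolding h1 h2 W_def p1_def c_def
          by (simp add: dvd_shift)
      next
        case 3
        then show ?thesis using v unfolding h3 h4 W_def p2_def by blast
      qed
    qed
    then show "y \<in> D" unfolding D_def coprime_prim_iff using yP ym by blast
  qed
  have finD: "finite D"
    unfolding D_def by (rule finite_subset[of _ "\<Pi>\<^sub>E i\<in>{l+1..k}. {..<P i}"]) (auto intro: finite_PiE)
  have finG: "finite (G l g a j)"
    unfolding G_def by (rule finite_subset[of _ "\<Pi>\<^sub>E i\<in>{l+1..j}. {..<P i}"]) (auto intro: finite_PiE)
  have "(\<Prod>i=l+1..j. cc g i) * (p1 - 4) \<le> card (G l g a j) * (p1 - 4)"
    using G_bound[OF assms(2) _ ca] lj by simp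
  also have "\<dots> = (\<Sum>ms\<in>G l g a j. p1 - 4)" by simp
  also have "\<dots> \<le> (\<Sum>ms\<in>G l g a j. card (W ms))" by (rule sum_mono) (rule cardW)
  also have "\<dots> = card (Sigma (G l g a j) W)"
    by (rule card_SigmaI[symmetric]) (auto simp: finG W_def)
  also have "\<dots> = card (F ` Sigma (G l g a j) W)" by (rule card_image[OF inj, symmetric])
  also have "\<dots> \<le> card D" by (rule card_mono[OF finD img])
  finally have main: "(\<Prod>i=l+1..j. cc g i) * (p1 - 4) \<le> derived_count l k g a m" unfolding Deq .
  have nr: "nring l g (k - 2) = real (\<Prod>i=l+1..j. cc g i)" unfolding j_def by (rule nring_eq[OF assms(2)])
  show ?thesis
  proof (cases "p1 \<ge> 4")
    case True
    have "nring l g (k - 2) * (real (P (k - 1)) - 4) = real ((\<Prod>i=l+1..j. cc g i) * (p1 - 4))"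
      unfolding nr k1 p1_def[symmetric] using True by (simp add: of_nat_diff)
    also have "\<dots> \<le> real (derived_count l k g a m)" using main by linarith
    finally show ?thesis .
  next
    case False
    have "nring l g (k - 2) * (real (P (k - 1)) - 4) \<le> 0"
      unfolding nr k1 p1_def[symmetric] by (rule mult_nonneg_nonpos) (use False in \<open>simp_all add: prod_nonneg\<close>)
    then show ?thesis by simp
  qed
qed

end
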